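(* Let $\gamma,\sigma:[a,b]\to V$ be continuous paths of bounded variation in a finite-dimensional real inner product space $V$, fix $(s,t)\in[a,b]^2$, and define $f(x):=K^{x\gamma,\sigma}(s,t)=\sum_{k\ge0}x^k\langle S(\gamma)^k_{a,s},S(\sigma)^k_{a,t}\rangle_k$ for $x\in\mathbb{R}$, where $S(\gamma)^k_{a,s}=\int_{a<u_1<\cdots<u_k<s}d\gamma_{u_1}\cdots d\gamma_{u_k}$ and $\langle\cdot,\cdot\rangle_k$ is the Hilbert–Schmidt inner product on $V^{\otimes k}$. Then $f$ is infinitely differentiable and, for every $k\in\mathbb{N}$, \[ f^{(k)}(x)=\sum_{l=0}^{\infty}x^{l}\frac{(l+k)!}{l!}\left\langle S(\gamma)_{a,s}^{l+k},S(\sigma)_{a,t}^{l+k}\right\rangle_{l+k}. \] In particular, \[ \left|f^{(k)}(x)\right|\leq\frac{L_{s}(\gamma)^{k/2}L_{t}(\sigma)^{k/2}}{|x|^{k/2}}I_{k}\left(2\sqrt{|x|L_{s}(\gamma)L_{t}(\sigma)}\right), \] where $L_s(\gamma)$ is the length of the path segment $\gamma|_{[a,s]}$, $L_t(\sigma)$ that of $\sigma|_{[a,t]}$, and $I_k$ is the modified Bessel function of the first kind of order $k$.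
   Context: $K^{\gamma,\sigma}(s,t)=\sum_{k\ge0}\langle S(\gamma)^k_{a,s},S(\sigma)^k_{a,t}\rangle_k$ is the original signature kernel, and $x\gamma$ denotes the path $u\mapsto x\gamma_u$. *)

theory Defs
  imports "HOL-Analysis.Analysis"
begin

definition is_partition :: "real \<Rightarrow> real \<Rightarrow> real list \<Rightarrow> bool" where
  "is_partition a b ts \<longleftrightarrow> ts \<noteq> [] \<and> hd ts = a \<and> last ts = b \<and> sorted_wrt (<) ts"

definition is_tagged_partition :: "real \<Rightarrow> real \<Rightarrow> real list \<Rightarrow> real list \<Rightarrow> bool" where
  "is_tagged_partition a b ts xs \<longleftrightarrow> is_partition a b ts \<and> length ts = Suc (length xs) \<and>
     (\<forall>i<length xs. ts!i \<le> xs!i \<and> xs!i \<le> ts!(Suc i))"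

definition mesh_less :: "real list \<Rightarrow> real \<Rightarrow> bool" where
  "mesh_less ts d \<longleftrightarrow> (\<forall>i. Suc i < length ts \<longrightarrow> ts!(Suc i) - ts!i < d)"

definition variation_sums :: "(real \<Rightarrow> 'a::real_normed_vector) \<Rightarrow> real \<Rightarrow> real \<Rightarrow> real set" where
  "variation_sums g a b =
     (\<lambda>ts. \<Sum>i<length ts - 1. norm (g (ts!(Suc i)) - g (ts!i))) ` {ts. is_partition a b ts}"

definition has_bounded_variation_on :: "(real \<Rightarrow> 'a::real_normed_vector) \<Rightarrow> real \<Rightarrow> real \<Rightarrow> bool" where
  "has_bounded_variation_on g a b \<longleftrightarrow> bdd_above (variation_sums g a b)"

definition path_length :: "(real \<Rightarrow> 'a::real_normed_vector) \<Rightarrow> real \<Rightarrow> real \<Rightarrow> real" where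
  "path_length g a b = Sup (variation_sums g a b)"

definition has_RS_integral :: "(real \<Rightarrow> real) \<Rightarrow> (real \<Rightarrow> real) \<Rightarrow> real \<Rightarrow> real \<Rightarrow> real \<Rightarrow> bool" where
  "has_RS_integral f h a b I \<longleftrightarrow>
     (\<forall>e>0. \<exists>d>0. \<forall>ts xs. is_tagged_partition a b ts xs \<and> mesh_less ts d \<longrightarrow>
        \<bar>(\<Sum>i<length xs. f (xs!i) * (h (ts!(Suc i)) - h (ts!i))) - I\<bar> < e)"

definition RS_integral :: "(real \<Rightarrow> real) \<Rightarrow> (real \<Rightarrow> real) \<Rightarrow> real \<Rightarrow> real \<Rightarrow> real" where
  "RS_integral f h a b = (THE I. has_RS_integral f h a b I)"

text \<open>sig_rev g a w t is the coordinate of S(g)^k_{a,t} at the basis word rev w: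
  S(g)^{k+1}_{a,t}(e_1..e_k e) = \<integral>_a^t S(g)^k_{a,u}(e_1..e_k) d<g_u,e>.\<close>
fun sig_rev :: "(real \<Rightarrow> 'a::euclidean_space) \<Rightarrow> real \<Rightarrow> 'a list \<Rightarrow> real \<Rightarrow> real" where
  "sig_rev g a [] t = 1"
| "sig_rev g a (e # w) t = RS_integral (\<lambda>u. sig_rev g a w u) (\<lambda>u. g u \<bullet> e) a t"

definition sig_coord :: "(real \<Rightarrow> 'a::euclidean_space) \<Rightarrow> real \<Rightarrow> 'a list \<Rightarrow> real \<Rightarrow> real" where
  "sig_coord g a w t = sig_rev g a (rev w) t"

text \<open>Hilbert--Schmidt inner product <S(g)^k_{a,s}, S(h)^k_{a,t}>_k on V^{\<otimes>k},
  written out in the orthonormal basis of V^{\<otimes>k} induced by Basis.\<close>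
definition sig_inner :: "(real \<Rightarrow> 'a::euclidean_space) \<Rightarrow> (real \<Rightarrow> 'a) \<Rightarrow> real \<Rightarrow> real \<Rightarrow> real \<Rightarrow> nat \<Rightarrow> real" where
  "sig_inner g h a s t k =
     (\<Sum>w\<in>{w. set w \<subseteq> Basis \<and> length w = k}. sig_coord g a w s * sig_coord h a w t)"

definition besselI :: "nat \<Rightarrow> real \<Rightarrow> real" where
  "besselI k z = (\<Sum>m. (z / 2) ^ (2 * m + k) / (fact m * fact (m + k)))"

end

theory Submission
  imports Defs
begin

fun isum :: "(real \<Rightarrow> real \<Rightarrow> real) \<Rightarrow> real list \<Rightarrow> real" where
  "isum F (x # y # zs) = F x y + isum F (y # zs)"
| "isum F _ = 0"

fun consec :: "(real \<Rightarrow> real \<Rightarrow> bool) \<Rightarrow> real list \<Rightarrow> bool" where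
  "consec P (x # y # zs) = (P x y \<and> consec P (y # zs))"
| "consec P _ = True"

lemma isum_conv: "isum F ts = (\<Sum>i<length ts - 1. F (ts!i) (ts!(Suc i)))"
proof (induction F ts rule: isum.induct)
  case (1 F x y zs)
  then show ?case by (simp add: sum.lessThan_Suc_shift del: sum.lessThan_Suc)
qed auto

lemma consec_conv: "consec P ts \<longleftrightarrow> (\<forall>i. Suc i < length ts \<longrightarrow> P (ts!i) (ts!(Suc i)))"
proof (induction P ts rule: consec.induct)
  case (1 P x y zs)
  show ?case
  proof
    assume "consec P (x # y # zs)"
    then show "\<forall>i. Suc i < length (x # y # zs) \<longrightarrow> P ((x # y # zs) ! i) ((x # y # zs) ! Suc i)"
      using 1 by (auto simp: less_Suc_eq_0_disj)
  next
    assume "\<forall>i. Suc i < length (x # y # zs) \<longrightarrow> P ((x # y # zs) ! i) ((x # y # zs) ! Suc i)"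
    then show "consec P (x # y # zs)" using 1
      by (metis Suc_less_eq consec.simps(1) length_Cons nth_Cons_0 nth_Cons_Suc zero_less_Suc)
  qed
qed auto

lemma consec_mono:
  assumes "consec P ts" "\<And>u v. u \<in> set ts \<Longrightarrow> v \<in> set ts \<Longrightarrow> P u v \<Longrightarrow> Q u v"
  shows "consec Q ts"
  using assms by (induction P ts rule: consec.induct) auto

lemma consec_sorted: "sorted_wrt (<) ts \<Longrightarrow> consec (<) ts"
  by (induction "(<) :: real \<Rightarrow> real \<Rightarrow> bool" ts rule: consec.induct) auto

lemma consec_mesh: "mesh_less ts d \<longleftrightarrow> consec (\<lambda>u v. v - u < d) ts"
  by (simp add: mesh_less_def consec_conv)

lemma isum_le: "consec (\<lambda>u v. F u v \<le> G u v) ts \<Longrightarrow> isum F ts \<le> isum G ts"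
  by (induction "\<lambda>u v. F u v \<le> G u v" ts rule: consec.induct) auto

lemma isum_abs: "\<bar>isum F ts\<bar> \<le> isum (\<lambda>u v. \<bar>F u v\<bar>) ts"
  by (induction F ts rule: isum.induct) auto

lemma isum_diff: "isum (\<lambda>u v. F u v - G u v) ts = isum F ts - isum G ts"
  by (induction F ts rule: isum.induct) auto

lemma isum_cmult: "isum (\<lambda>u v. c * F u v) ts = c * isum F ts"
  by (induction F ts rule: isum.induct) (auto simp: algebra_simps)

lemma isum_tele: "ts \<noteq> [] \<Longrightarrow> isum (\<lambda>u v. \<phi> v - \<phi> u) ts = \<phi> (last ts) - \<phi> (hd ts)"
  by (induction "\<lambda>u v. \<phi> v - \<phi> u" ts rule: isum.induct) auto

lemma isum_append: "isum F (xs @ [y]) + isum F (y # ys) = isum F (xs @ y # ys)"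
proof (induction xs)
  case (Cons x xs)
  then show ?case by (cases xs) auto
qed auto

lemma sorted_hd_less_last: "sorted_wrt (<) (ts::real list) \<Longrightarrow> length ts \<ge> 2 \<Longrightarrow> hd ts < last ts"
proof (induction ts)
  case (Cons x ts)
  then show ?case
    by (cases ts) (auto simp: Suc_le_eq)
qed auto

lemma sorted_range: "sorted_wrt (<) (ts::real list) \<Longrightarrow> u \<in> set ts \<Longrightarrow> hd ts \<le> u \<and> u \<le> last ts"
proof (induction ts)
  case (Cons x ts)
  then show ?case
    by (cases ts) (auto, meson last_in_set less_imp_le)
qed auto

lemma partition_range: "is_partition a b ts \<Longrightarrow> u \<in> set ts \<Longrightarrow> a \<le> u \<and> u \<le> b"
  unfolding is_partition_def using sorted_range by blast

lemma partition_le: "is_partition a b ts \<Longrightarrow> a \<le> b"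
  using partition_range[of a b ts "hd ts"] unfolding is_partition_def by auto

lemma partition_single: "is_partition a a ts \<Longrightarrow> ts = [a]"
proof -
  assume p: "is_partition a a ts"
  then have "\<not> length ts \<ge> 2" using sorted_hd_less_last unfolding is_partition_def by fastforce
  with p show ?thesis unfolding is_partition_def
    by (cases ts) (auto simp: Suc_le_eq)
qed

definition tagsum :: "(real \<Rightarrow> real) \<Rightarrow> (real \<Rightarrow> real) \<Rightarrow> real list \<Rightarrow> real list \<Rightarrow> real" where
  "tagsum f h ts xs = (\<Sum>i<length xs. f (xs!i) * (h (ts!(Suc i)) - h (ts!i)))"

definition lsum :: "(real \<Rightarrow> real) \<Rightarrow> (real \<Rightarrow> real) \<Rightarrow> real list \<Rightarrow> real" where
  "lsum f h ts = isum (\<lambda>u v. f u * (h v - h u)) ts"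

lemma consec_append: "consec P (xs @ [y]) \<Longrightarrow> consec P (y # ys) \<Longrightarrow> consec P (xs @ y # ys)"
proof (induction xs)
  case (Cons x xs)
  then show ?case by (cases xs) auto
qed auto

lemma partition_exists_aux:
  fixes d :: real assumes "d > 0"
  shows "\<forall>a b. a \<le> b \<longrightarrow> b - a < real n * (d/2) \<longrightarrow> (\<exists>ts. is_partition a b ts \<and> mesh_less ts d)"
proof (induction n)
  case 0
  then show ?case using assms by auto
next
  case (Suc n)
  show ?case
  proof (intro allI impI)
    fix a b :: real assume ab: "a \<le> b" "b - a < real (Suc n) * (d/2)"
    show "\<exists>ts. is_partition a b ts \<and> mesh_less ts d"
    proof (cases "b - a < d")
      case True
      show ?thesis
      proof (cases "a = b")
        case True
        then show ?thesis by (auto simp: is_partition_def mesh_less_def intro!: exI[of _ "[a]"])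
      next
        case False
        then show ?thesis using True ab
          by (auto simp: is_partition_def mesh_less_def less_Suc_eq_0_disj intro!: exI[of _ "[a,b]"])
      qed
    next
      case False
      define c where "c = a + d/2"
      have "c \<le> b" "b - c < real n * (d/2)" using False ab assms by (auto simp: c_def algebra_simps)
      then obtain ss where ss: "is_partition c b ss" "mesh_less ss d" using Suc by blast
      have "a < c" using assms by (simp add: c_def)
      have "\<forall>u\<in>set ss. a < u" using partition_range[OF ss(1)] \<open>a < c\<close> by force
      then have "is_partition a b (a # ss)" using ss(1) by (auto simp: is_partition_def)
      moreover have "mesh_less (a # ss) d"
        using ss \<open>a < c\<close> assms unfolding consec_mesh is_partition_def
        by (cases ss) (auto simp: c_def)
      ultimately show ?thesis by blast
    qed
  qed
qed

lemma partition_exists: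
  fixes d :: real assumes "d > 0" "a \<le> b"
  shows "\<exists>ts. is_partition a b ts \<and> mesh_less ts d"
proof -
  have "0 < d/2" using assms by simp
  then obtain n where "b - a < real n * (d/2)"
    using reals_Archimedean3 by blast
  then show ?thesis using partition_exists_aux[OF assms(1), of n] assms by blast
qed

lemma partition_sorted: "is_partition a b ts \<Longrightarrow> sorted_wrt (<) ts"
  by (simp add: is_partition_def)

lemma partition_concat:
  assumes "is_partition a x ts" "is_partition x y ss"
  shows "is_partition a y (ts @ tl ss)" "ts @ tl ss = butlast ts @ x # tl ss"
proof -
  have ts: "ts = butlast ts @ [x]" using assms(1) unfolding is_partition_def by (metis append_butlast_last_id)
  have ss: "ss = x # tl ss" using assms(2) unfolding is_partition_def by (cases ss) auto
  show "ts @ tl ss = butlast ts @ x # tl ss" by (subst ts) simp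
  have A: "\<forall>u\<in>set ts. u \<le> x" using partition_range[OF assms(1)] by auto
  have "sorted_wrt (<) (x # tl ss)" using assms(2) ss unfolding is_partition_def by metis
  then have B: "\<forall>u\<in>set (tl ss). x < u" and C: "sorted_wrt (<) (tl ss)" by auto
  have D: "sorted_wrt (<) ts" using assms(1) unfolding is_partition_def by simp
  have E: "\<forall>u\<in>set ts. \<forall>v\<in>set (tl ss). u < v" using A B by force
  have "sorted_wrt (<) (ts @ tl ss)"
    unfolding sorted_wrt_append using C D E by blast
  moreover have "last (ts @ tl ss) = y"
  proof (cases "tl ss = []")
    case True
    then have "ss = [x]" using ss by simp
    then have "y = x" using assms(2) unfolding is_partition_def by simp
    then show ?thesis using True assms(1) unfolding is_partition_def by simp
  next
    case False
    then have "last ss = last (tl ss)" using ss by (metis last_ConsR)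
    then show ?thesis using False assms(2) unfolding is_partition_def by simp
  qed
  moreover have "ts @ tl ss \<noteq> []" "hd (ts @ tl ss) = a" using assms(1) unfolding is_partition_def by auto
  ultimately show "is_partition a y (ts @ tl ss)"
    unfolding is_partition_def by blast
qed

lemma mesh_concat:
  assumes "is_partition a x ts" "is_partition x y ss" "mesh_less ts d" "mesh_less ss d"
  shows "mesh_less (ts @ tl ss) d"
proof -
  have ts: "ts = butlast ts @ [x]" using assms(1) unfolding is_partition_def by (metis append_butlast_last_id)
  have ss: "ss = x # tl ss" using assms(2) unfolding is_partition_def by (cases ss) auto
  have "consec (\<lambda>u v. v - u < d) (butlast ts @ [x])" using assms(3) ts unfolding consec_mesh by metis
  moreover have "consec (\<lambda>u v. v - u < d) (x # tl ss)" using assms(4) ss unfolding consec_mesh by metis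
  ultimately have "consec (\<lambda>u v. v - u < d) (butlast ts @ x # tl ss)" by (rule consec_append)
  then show ?thesis unfolding consec_mesh partition_concat(2)[OF assms(1,2)] .
qed

lemma lsum_concat:
  assumes "is_partition a x ts" "is_partition x y ss"
  shows "lsum f h (ts @ tl ss) = lsum f h ts + lsum f h ss"
proof -
  have ts: "ts = butlast ts @ [x]" using assms(1) unfolding is_partition_def by (metis append_butlast_last_id)
  have ss: "ss = x # tl ss" using assms(2) unfolding is_partition_def by (cases ss) auto
  have "lsum f h (butlast ts @ [x]) + lsum f h (x # tl ss) = lsum f h (butlast ts @ x # tl ss)"
    unfolding lsum_def by (rule isum_append)
  then show ?thesis unfolding partition_concat(2)[OF assms(1,2)] using ts ss by metis
qed

lemma left_tagged:
  assumes "is_partition a b ts"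
  shows "is_tagged_partition a b ts (butlast ts)" "tagsum f h ts (butlast ts) = lsum f h ts"
proof -
  have ne: "ts \<noteq> []" using assms by (simp add: is_partition_def)
  have s: "sorted_wrt (<) ts" using assms by (simp add: is_partition_def)
  have "\<forall>i. Suc i < length ts \<longrightarrow> ts!i < ts!Suc i"
    using s by (simp add: sorted_wrt_iff_nth_Suc_transp)
  then have "\<forall>i. i < length ts - 1 \<longrightarrow> ts!i \<le> ts!Suc i"
    by (simp add: less_imp_le less_diff_conv)
  then show "is_tagged_partition a b ts (butlast ts)"
    using assms ne by (auto simp: is_tagged_partition_def nth_butlast)
  show "tagsum f h ts (butlast ts) = lsum f h ts"
    unfolding tagsum_def lsum_def isum_conv by (simp add: nth_butlast)
qed

lemma partition_merge:
  assumes "is_partition a b ts" "is_partition a b ss"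
  shows "is_partition a b (sorted_list_of_set (set ts \<union> set ss))"
proof -
  let ?rs = "sorted_list_of_set (set ts \<union> set ss)"
  have set: "set ?rs = set ts \<union> set ss" by simp
  have s: "sorted_wrt (<) ?rs" by (simp add: strict_sorted_list_of_set)
  have a: "a \<in> set ?rs" "b \<in> set ?rs" using assms unfolding is_partition_def
    by (auto simp: hd_in_set last_in_set)
  have ne: "?rs \<noteq> []" using a by auto
  have le: "hd ?rs \<le> a" "last ?rs \<ge> b" using sorted_range[OF s] a by auto
  have h1: "hd ?rs \<in> set ts \<union> set ss" "last ?rs \<in> set ts \<union> set ss"
    using hd_in_set[OF ne] last_in_set[OF ne] set by auto
  have "hd ?rs \<ge> a" using partition_range[OF assms(1)] partition_range[OF assms(2)] h1(1) by blast
  moreover have "last ?rs \<le> b" using partition_range[OF assms(1)] partition_range[OF assms(2)] h1(2) by blast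
  ultimately show ?thesis using s ne le unfolding is_partition_def by auto
qed

definition control :: "(real \<Rightarrow> real) \<Rightarrow> (real \<Rightarrow> real) \<Rightarrow> real \<Rightarrow> real \<Rightarrow> bool" where
  "control h W a b \<longleftrightarrow> (\<forall>x y. a \<le> x \<longrightarrow> x \<le> y \<longrightarrow> y \<le> b \<longrightarrow> \<bar>h y - h x\<bar> \<le> W y - W x)"

definition ucont :: "(real \<Rightarrow> real) \<Rightarrow> real \<Rightarrow> real \<Rightarrow> real \<Rightarrow> real \<Rightarrow> bool" where
  "ucont f a b \<delta> \<epsilon> \<longleftrightarrow> (\<forall>u\<in>{a..b}. \<forall>v\<in>{a..b}. \<bar>u - v\<bar> < \<delta> \<longrightarrow> \<bar>f u - f v\<bar> \<le> \<epsilon>)"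

lemma ucont_exists:
  assumes "continuous_on {a..b} f" "\<epsilon> > 0"
  shows "\<exists>\<delta>>0. ucont f a b \<delta> \<epsilon>"
proof -
  have "uniformly_continuous_on {a..b} f"
    using assms(1) by (rule compact_uniformly_continuous) simp
  then obtain \<delta> where d: "\<delta> > 0" "\<forall>u\<in>{a..b}. \<forall>v\<in>{a..b}. dist v u < \<delta> \<longrightarrow> dist (f v) (f u) < \<epsilon>"
    unfolding uniformly_continuous_on_def using assms(2) by blast
  have "ucont f a b \<delta> \<epsilon>" unfolding ucont_def
  proof (intro ballI impI)
    fix u v assume "u \<in> {a..b}" "v \<in> {a..b}" "\<bar>u - v\<bar> < \<delta>"
    then have "dist (f u) (f v) < \<epsilon>" using d(2) by (simp add: dist_real_def)
    then show "\<bar>f u - f v\<bar> \<le> \<epsilon>" by (simp add: dist_real_def)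
  qed
  then show ?thesis using d(1) by blast
qed

lemma ucont_mono: "ucont f a b \<delta> \<epsilon> \<Longrightarrow> a \<le> a' \<Longrightarrow> b' \<le> b \<Longrightarrow> ucont f a' b' \<delta> \<epsilon>"
  unfolding ucont_def by auto

lemma control_mono: "control h W a b \<Longrightarrow> a \<le> a' \<Longrightarrow> b' \<le> b \<Longrightarrow> control h W a' b'"
  unfolding control_def by auto

lemma control_W: "control h W a b \<Longrightarrow> a \<le> x \<Longrightarrow> x \<le> y \<Longrightarrow> y \<le> b \<Longrightarrow> W x \<le> W y"
proof -
  assume "control h W a b" "a \<le> x" "x \<le> y" "y \<le> b"
  then have "\<bar>h y - h x\<bar> \<le> W y - W x" unfolding control_def by blast
  moreover have "0 \<le> \<bar>h y - h x\<bar>" by simp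
  ultimately show "W x \<le> W y" by linarith
qed

lemma mesh_mono: "mesh_less ts d \<Longrightarrow> d \<le> d' \<Longrightarrow> mesh_less ts d'"
  unfolding mesh_less_def by force

lemma single_interval:
  assumes uc: "ucont f a b \<delta> \<epsilon>" and ctl: "control h W a b"
    and s: "sorted_wrt (<) rs" "rs \<noteq> []" "hd rs = x" "last rs = y"
    and xy: "a \<le> x" "y \<le> b" "y - x < \<delta>"
  shows "\<bar>lsum f h rs - f x * (h y - h x)\<bar> \<le> \<epsilon> * (W y - W x)"
proof -
  have rng: "x \<le> u \<and> u \<le> y" if "u \<in> set rs" for u using sorted_range[OF s(1) that] s(3,4) by simp
  have "x \<le> y" using rng[of x] s hd_in_set[OF s(2)] by simp
  have xab: "x \<in> {a..b}" using xy \<open>x \<le> y\<close> by auto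
  have "\<delta> > 0" using xy \<open>x \<le> y\<close> by linarith
  then have "\<bar>f x - f x\<bar> \<le> \<epsilon>" using uc[unfolded ucont_def, rule_format, OF xab xab] by simp
  then have e0: "0 \<le> \<epsilon>" by simp
  have eq: "f x * (h y - h x) = isum (\<lambda>u v. f x * h v - f x * h u) rs"
    using isum_tele[OF s(2), of "\<lambda>v. f x * h v"] s by (simp add: algebra_simps)
  have "\<bar>lsum f h rs - f x * (h y - h x)\<bar> = \<bar>isum (\<lambda>u v. f u * (h v - h u) - (f x * h v - f x * h u)) rs\<bar>"
    unfolding lsum_def eq isum_diff ..
  also have "\<dots> \<le> isum (\<lambda>u v. \<bar>f u * (h v - h u) - (f x * h v - f x * h u)\<bar>) rs"
    by (rule isum_abs)
  also have "\<dots> \<le> isum (\<lambda>u v. \<epsilon> * (W v - W u)) rs"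
  proof (rule isum_le, rule consec_mono[OF consec_sorted[OF s(1)]])
    fix u v assume uv: "u \<in> set rs" "v \<in> set rs" "u < v"
    have "u \<in> {a..b}" "\<bar>u - x\<bar> < \<delta>" using rng[OF uv(1)] xy by auto
    then have "\<bar>f u - f x\<bar> \<le> \<epsilon>" using uc[unfolded ucont_def, rule_format, OF _ xab] by blast
    moreover have "\<bar>h v - h u\<bar> \<le> W v - W u"
    proof -
      have "a \<le> u" "u \<le> v" "v \<le> b" using rng[OF uv(1)] rng[OF uv(2)] uv(3) xy by auto
      then show ?thesis using ctl unfolding control_def by blast
    qed
    ultimately have "\<bar>f u - f x\<bar> * \<bar>h v - h u\<bar> \<le> \<epsilon> * (W v - W u)"
      by (intro mult_mono e0) auto
    moreover have "f u * (h v - h u) - (f x * h v - f x * h u) = (f u - f x) * (h v - h u)"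
      by (simp add: algebra_simps)
    ultimately show "\<bar>f u * (h v - h u) - (f x * h v - f x * h u)\<bar> \<le> \<epsilon> * (W v - W u)"
      by (simp add: abs_mult)
  qed
  also have "\<dots> = \<epsilon> * (W y - W x)"
    unfolding isum_cmult isum_tele[OF s(2)] using s by simp
  finally show ?thesis .
qed

lemma refine:
  assumes uc: "ucont f a b \<delta> \<epsilon>" and ctl: "control h W a b"
  shows "sorted_wrt (<) ts \<Longrightarrow> sorted_wrt (<) rs \<Longrightarrow> ts \<noteq> [] \<Longrightarrow> set ts \<subseteq> set rs
    \<Longrightarrow> hd ts = hd rs \<Longrightarrow> last ts = last rs \<Longrightarrow> mesh_less ts \<delta> \<Longrightarrow> set rs \<subseteq> {a..b}
    \<Longrightarrow> \<bar>lsum f h ts - lsum f h rs\<bar> \<le> \<epsilon> * (W (last ts) - W (hd ts))"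
proof (induction ts arbitrary: rs rule: induct_list012)
  case 1
  then show ?case by simp
next
  case (2 x)
  then have "\<not> length rs \<ge> 2" using sorted_hd_less_last[OF 2(2)] by auto
  then have "rs = [x]" using 2 by (cases rs) (auto simp: Suc_le_eq)
  then show ?case by (simp add: lsum_def)
next
  case (3 x y zs)
  have xy: "x < y" using 3(3) by simp
  have "y \<in> set rs" using 3(6) by auto
  then obtain r1 r2 where rs: "rs = r1 @ y # r2" by (meson split_list)
  have r1ne: "r1 \<noteq> []" using rs 3(7) xy by auto
  have hdr1: "hd r1 = x" using rs 3(7) r1ne by simp
  have srs: "sorted_wrt (<) (r1 @ y # r2)" using 3(4) rs by simp
  then have r1y: "\<forall>u\<in>set r1. u < y" and sr1: "sorted_wrt (<) (r1 @ [y])"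
    and sr2: "sorted_wrt (<) (y # r2)"
    by (auto simp: sorted_wrt_append)
  have zs: "set zs \<subseteq> set r2"
  proof
    fix z assume z: "z \<in> set zs"
    then have "y < z" using 3(3) by simp
    moreover have "z \<in> set rs" using z 3(6) by auto
    ultimately show "z \<in> set r2" using rs r1y by auto
  qed
  have lst: "last (y # zs) = last (y # r2)" using 3(8) rs by simp
  have IH: "\<bar>lsum f h (y # zs) - lsum f h (y # r2)\<bar> \<le> \<epsilon> * (W (last (y # zs)) - W (hd (y # zs)))"
  proof (rule 3(2))
    show "sorted_wrt (<) (y # zs)" using 3(3) by simp
    show "sorted_wrt (<) (y # r2)" by (rule sr2)
    show "y # zs \<noteq> []" by simp
    show "set (y # zs) \<subseteq> set (y # r2)" using zs by auto
    show "hd (y # zs) = hd (y # r2)" by simp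
    show "last (y # zs) = last (y # r2)" by (rule lst)
    show "mesh_less (y # zs) \<delta>" using 3(9) unfolding consec_mesh by simp
    show "set (y # r2) \<subseteq> {a..b}" using 3(10) rs by auto
  qed
  have xa: "a \<le> x" using 3(10) 3(6) by auto
  have yb: "y \<le> b" using 3(10) 3(6) by auto
  have yd: "y - x < \<delta>" using 3(9) unfolding consec_mesh by simp
  have SI: "\<bar>lsum f h (r1 @ [y]) - f x * (h y - h x)\<bar> \<le> \<epsilon> * (W y - W x)"
    by (rule single_interval[OF uc ctl sr1]) (use r1ne hdr1 xa yb yd in auto)
  have e1: "lsum f h (x # y # zs) = f x * (h y - h x) + lsum f h (y # zs)" by (simp add: lsum_def)
  have e2: "lsum f h rs = lsum f h (r1 @ [y]) + lsum f h (y # r2)"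
    unfolding rs lsum_def by (rule isum_append[symmetric])
  have "last (x # y # zs) = last (y # zs)" by simp
  then show ?case using IH SI e1 e2 by (simp add: algebra_simps)
qed

lemma tag_vs_left:
  assumes uc: "ucont f a b \<delta> \<epsilon>" and ctl: "control h W a b" and e0: "0 \<le> \<epsilon>"
    and tp: "is_tagged_partition a b ts xs" and m: "mesh_less ts \<delta>"
  shows "\<bar>tagsum f h ts xs - lsum f h ts\<bar> \<le> \<epsilon> * (W b - W a)"
proof -
  have p: "is_partition a b ts" and len: "length ts = Suc (length xs)"
    and tg: "\<And>i. i < length xs \<Longrightarrow> ts!i \<le> xs!i \<and> xs!i \<le> ts!(Suc i)"
    using tp unfolding is_tagged_partition_def by auto
  have ne: "ts \<noteq> []" using p by (simp add: is_partition_def)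
  let ?n = "length xs"
  have lm: "lsum f h ts = (\<Sum>i<?n. f (ts!i) * (h (ts!Suc i) - h (ts!i)))"
    unfolding lsum_def isum_conv using len by simp
  have wm: "W b - W a = (\<Sum>i<?n. W (ts!Suc i) - W (ts!i))"
    using isum_tele[OF ne, of W] p len unfolding isum_conv is_partition_def by simp
  have "\<bar>tagsum f h ts xs - lsum f h ts\<bar> = \<bar>\<Sum>i<?n. (f (xs!i) - f (ts!i)) * (h (ts!Suc i) - h (ts!i))\<bar>"
    unfolding tagsum_def lm by (simp add: sum_subtractf[symmetric] algebra_simps)
  also have "\<dots> \<le> (\<Sum>i<?n. \<bar>(f (xs!i) - f (ts!i)) * (h (ts!Suc i) - h (ts!i))\<bar>)"
    by (rule sum_abs)
  also have "\<dots> \<le> (\<Sum>i<?n. \<epsilon> * (W (ts!Suc i) - W (ts!i)))"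
  proof (rule sum_mono)
    fix i assume "i \<in> {..<?n}"
    then have i: "i < ?n" by simp
    have t1: "ts!i \<in> {a..b}" "ts!Suc i \<in> {a..b}" using partition_range[OF p] i len
      by (auto intro!: nth_mem)
    have tl: "ts!i \<le> xs!i" "xs!i \<le> ts!Suc i" using tg[OF i] by auto
    have "ts!Suc i - ts!i < \<delta>" using m i len unfolding mesh_less_def by simp
    then have "\<bar>xs!i - ts!i\<bar> < \<delta>" using tl by simp
    moreover have "xs!i \<in> {a..b}" using t1 tl by auto
    ultimately have A: "\<bar>f (xs!i) - f (ts!i)\<bar> \<le> \<epsilon>" using uc t1(1) unfolding ucont_def by blast
    have B: "\<bar>h (ts!Suc i) - h (ts!i)\<bar> \<le> W (ts!Suc i) - W (ts!i)"
      using ctl t1 tl unfolding control_def by auto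
    have "\<bar>f (xs!i) - f (ts!i)\<bar> * \<bar>h (ts!Suc i) - h (ts!i)\<bar> \<le> \<epsilon> * (W (ts!Suc i) - W (ts!i))"
      by (rule mult_mono[OF A B e0]) simp
    then show "\<bar>(f (xs!i) - f (ts!i)) * (h (ts!Suc i) - h (ts!i))\<bar> \<le> \<epsilon> * (W (ts!Suc i) - W (ts!i))"
      by (simp add: abs_mult)
  qed
  also have "\<dots> = \<epsilon> * (W b - W a)" unfolding wm sum_distrib_left ..
  finally show ?thesis .
qed

lemma cauchy_bound:
  assumes uc: "ucont f a b \<delta> \<epsilon>" and ctl: "control h W a b" and e0: "0 \<le> \<epsilon>"
    and tp: "is_tagged_partition a b ts xs" and m: "mesh_less ts \<delta>"
    and ps: "is_partition a b ss" and ms: "mesh_less ss \<delta>"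
  shows "\<bar>tagsum f h ts xs - lsum f h ss\<bar> \<le> 3 * \<epsilon> * (W b - W a)"
proof -
  have p: "is_partition a b ts" using tp unfolding is_tagged_partition_def by auto
  let ?rs = "sorted_list_of_set (set ts \<union> set ss)"
  have pr: "is_partition a b ?rs" by (rule partition_merge[OF p ps])
  have A: "\<bar>tagsum f h ts xs - lsum f h ts\<bar> \<le> \<epsilon> * (W b - W a)"
    by (rule tag_vs_left[OF uc ctl e0 tp m])
  have rr: "set ?rs \<subseteq> {a..b}" using partition_range[OF pr] by auto
  have B: "\<bar>lsum f h ts - lsum f h ?rs\<bar> \<le> \<epsilon> * (W (last ts) - W (hd ts))"
    by (rule refine[OF uc ctl]) (use p pr rr in \<open>auto simp: is_partition_def m\<close>)
  have C: "\<bar>lsum f h ss - lsum f h ?rs\<bar> \<le> \<epsilon> * (W (last ss) - W (hd ss))"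
    by (rule refine[OF uc ctl]) (use ps pr rr in \<open>auto simp: is_partition_def ms\<close>)
  have "last ts = b" "hd ts = a" "last ss = b" "hd ss = a" using p ps by (auto simp: is_partition_def)
  then show ?thesis using A B C by simp
qed

lemma RS_exists:
  assumes ab: "a \<le> b" and fc: "continuous_on {a..b} f" and ctl: "control h W a b"
  shows "\<exists>I. has_RS_integral f h a b I"
proof -
  define D where "D = W b - W a"
  have D0: "0 \<le> D" using control_W[OF ctl order.refl ab order.refl] by (simp add: D_def)
  define P where "P n = (SOME ts. is_partition a b ts \<and> mesh_less ts (1 / real (Suc n)))" for n
  have P: "is_partition a b (P n) \<and> mesh_less (P n) (1 / real (Suc n))" for n
    unfolding P_def by (rule someI_ex) (rule partition_exists[OF _ ab], simp)
  have Pm: "\<exists>N. \<forall>n\<ge>N. mesh_less (P n) \<delta>" if d0: "\<delta> > 0" for \<delta>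
  proof -
    obtain N where N: "inverse (real (Suc N)) < \<delta>" using reals_Archimedean[OF d0] by blast
    have "mesh_less (P n) \<delta>" if "n \<ge> N" for n
    proof -
      have "1 / real (Suc n) \<le> 1 / real (Suc N)" using that by (simp add: frac_le)
      then have "1 / real (Suc n) \<le> \<delta>" using N by (simp add: inverse_eq_divide)
      then show ?thesis using P[of n] mesh_mono by blast
    qed
    then show ?thesis by blast
  qed
  define X where "X n = lsum f h (P n)" for n
  have XP: "is_tagged_partition a b (P n) (butlast (P n))" "tagsum f h (P n) (butlast (P n)) = X n" for n
    using left_tagged P[of n] unfolding X_def by auto
  have key: "\<exists>N. \<forall>m\<ge>N. \<forall>ts xs. is_tagged_partition a b ts xs \<and> mesh_less ts \<delta> \<longrightarrow>
        \<bar>tagsum f h ts xs - X m\<bar> \<le> 3 * \<epsilon> * D"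
    if uc: "ucont f a b \<delta> \<epsilon>" and e0: "0 \<le> \<epsilon>" and d0: "\<delta> > 0" for \<epsilon> \<delta>
  proof -
    obtain N where N: "\<forall>n\<ge>N. mesh_less (P n) \<delta>" using Pm[OF d0] by blast
    have "\<forall>m\<ge>N. \<forall>ts xs. is_tagged_partition a b ts xs \<and> mesh_less ts \<delta> \<longrightarrow>
        \<bar>tagsum f h ts xs - X m\<bar> \<le> 3 * \<epsilon> * D"
    proof (intro allI impI)
      fix m ts xs assume mN: "m \<ge> N" and tx: "is_tagged_partition a b ts xs \<and> mesh_less ts \<delta>"
      have "mesh_less (P m) \<delta>" using N mN by blast
      then show "\<bar>tagsum f h ts xs - X m\<bar> \<le> 3 * \<epsilon> * D"
        unfolding X_def D_def using cauchy_bound[OF uc ctl e0, of ts xs "P m"] P[of m] tx by blast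
    qed
    then show ?thesis by blast
  qed
  have eps: "\<exists>\<epsilon>>0. 3 * \<epsilon> * D < e" if "e > 0" for e
  proof -
    have "3 * (e / (3 * (D + 1))) * D < e" using that D0
      by (simp add: field_simps)
    moreover have "e / (3 * (D + 1)) > 0" using that D0 by simp
    ultimately show ?thesis by blast
  qed
  have "Cauchy X"
  proof (rule metric_CauchyI)
    fix e :: real assume "e > 0"
    then obtain \<epsilon> where e: "\<epsilon> > 0" "3 * \<epsilon> * D < e" using eps by auto
    obtain \<delta> where d: "\<delta> > 0" "ucont f a b \<delta> \<epsilon>" using ucont_exists[OF fc e(1)] by blast
    obtain N where N: "\<forall>m\<ge>N. \<forall>ts xs. is_tagged_partition a b ts xs \<and> mesh_less ts \<delta> \<longrightarrow>
        \<bar>tagsum f h ts xs - X m\<bar> \<le> 3 * \<epsilon> * D" using key[OF d(2) _ d(1)] e(1) by auto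
    obtain N2 where N2: "\<forall>n\<ge>N2. mesh_less (P n) \<delta>" using Pm[OF d(1)] by blast
    have "dist (X n) (X m) < e" if "m \<ge> max N N2" "n \<ge> max N N2" for m n
    proof -
      have mn: "mesh_less (P n) \<delta>" using N2 that by auto
      have "\<bar>tagsum f h (P n) (butlast (P n)) - X m\<bar> \<le> 3 * \<epsilon> * D"
        using N that XP(1)[of n] mn by auto
      then show ?thesis using XP(2)[of n] e(2) by (simp add: dist_real_def)
    qed
    then show "\<exists>M. \<forall>m\<ge>M. \<forall>n\<ge>M. dist (X m) (X n) < e" by blast
  qed
  then obtain I where I: "X \<longlonglongrightarrow> I" using Cauchy_convergent_iff convergent_def by blast
  have "has_RS_integral f h a b I"
    unfolding has_RS_integral_def
  proof (intro allI impI)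
    fix e :: real assume "e > 0"
    then obtain \<epsilon> where e: "\<epsilon> > 0" "3 * \<epsilon> * D < e" using eps by auto
    obtain \<delta> where d: "\<delta> > 0" "ucont f a b \<delta> \<epsilon>" using ucont_exists[OF fc e(1)] by blast
    obtain N where N: "\<forall>m\<ge>N. \<forall>ts xs. is_tagged_partition a b ts xs \<and> mesh_less ts \<delta> \<longrightarrow>
        \<bar>tagsum f h ts xs - X m\<bar> \<le> 3 * \<epsilon> * D" using key[OF d(2) _ d(1)] e(1) by auto
    have "\<bar>tagsum f h ts xs - I\<bar> < e" if tx: "is_tagged_partition a b ts xs \<and> mesh_less ts \<delta>" for ts xs
    proof -
      have "(\<lambda>m. \<bar>tagsum f h ts xs - X m\<bar>) \<longlonglongrightarrow> \<bar>tagsum f h ts xs - I\<bar>"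
        by (intro tendsto_intros I)
      moreover have "\<exists>M. \<forall>m\<ge>M. \<bar>tagsum f h ts xs - X m\<bar> \<le> 3 * \<epsilon> * D" using N tx by blast
      ultimately have "\<bar>tagsum f h ts xs - I\<bar> \<le> 3 * \<epsilon> * D" by (rule LIMSEQ_le_const2)
      then show ?thesis using e(2) by simp
    qed
    then show "\<exists>d>0. \<forall>ts xs. is_tagged_partition a b ts xs \<and> mesh_less ts d \<longrightarrow>
        \<bar>(\<Sum>i<length xs. f (xs ! i) * (h (ts ! Suc i) - h (ts ! i))) - I\<bar> < e"
      using d(1) unfolding tagsum_def by blast
  qed
  then show ?thesis by blast
qed

lemma RS_unique:
  assumes "a \<le> b" "has_RS_integral f h a b I" "has_RS_integral f h a b J"
  shows "I = J"
proof (rule ccontr)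
  assume "I \<noteq> J"
  then have e: "\<bar>I - J\<bar> / 2 > 0" by simp
  obtain d1 where d1: "d1 > 0" "\<forall>ts xs. is_tagged_partition a b ts xs \<and> mesh_less ts d1 \<longrightarrow>
        \<bar>tagsum f h ts xs - I\<bar> < \<bar>I - J\<bar> / 2"
    using assms(2) e unfolding has_RS_integral_def tagsum_def by blast
  obtain d2 where d2: "d2 > 0" "\<forall>ts xs. is_tagged_partition a b ts xs \<and> mesh_less ts d2 \<longrightarrow>
        \<bar>tagsum f h ts xs - J\<bar> < \<bar>I - J\<bar> / 2"
    using assms(3) e unfolding has_RS_integral_def tagsum_def by blast
  obtain ts where ts: "is_partition a b ts" "mesh_less ts (min d1 d2)"
    using partition_exists[OF _ assms(1), of "min d1 d2"] d1 d2 by auto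
  have m: "mesh_less ts d1" "mesh_less ts d2" using ts(2) mesh_mono by fastforce+
  have "\<bar>tagsum f h ts (butlast ts) - I\<bar> < \<bar>I - J\<bar> / 2" "\<bar>tagsum f h ts (butlast ts) - J\<bar> < \<bar>I - J\<bar> / 2"
    using d1 d2 m left_tagged(1)[OF ts(1)] by auto
  then show False by (auto simp: abs_if split: if_splits)
qed

lemma RS_eq:
  assumes "a \<le> b" "has_RS_integral f h a b I"
  shows "RS_integral f h a b = I"
  unfolding RS_integral_def using RS_unique[OF assms(1)] assms(2) by blast

lemma RS_has:
  assumes "a \<le> t" "t \<le> b" "continuous_on {a..b} f" "control h W a b"
  shows "has_RS_integral f h a t (RS_integral f h a t)"
proof -
  have "continuous_on {a..t} f" using assms(3) by (rule continuous_on_subset) (use assms(2) in auto)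
  moreover have "control h W a t" using control_mono[OF assms(4)] assms(2) by auto
  ultimately obtain I where "has_RS_integral f h a t I" using RS_exists[OF assms(1)] by blast
  then show ?thesis using RS_eq[OF assms(1)] by simp
qed

lemma RS_incr:
  assumes fc: "continuous_on {a..b} f" and ctl: "control h W a b"
    and uc: "ucont f a b \<delta> \<epsilon>" and xy: "a \<le> x" "x \<le> y" "y \<le> b" "y - x < \<delta>"
  shows "\<bar>RS_integral f h a y - RS_integral f h a x - f x * (h y - h x)\<bar> \<le> \<epsilon> * (W y - W x)"
proof (rule field_le_epsilon)
  fix \<eta> :: real assume eta: "\<eta> > 0"
  let ?Fx = "RS_integral f h a x" and ?Fy = "RS_integral f h a y"
  have Ix: "has_RS_integral f h a x ?Fx" by (rule RS_has[OF xy(1) _ fc ctl]) (use xy in auto)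
  have Iy: "has_RS_integral f h a y ?Fy" by (rule RS_has[OF _ xy(3) fc ctl]) (use xy in auto)
  obtain d1 where d1: "d1 > 0" "\<forall>ts xs. is_tagged_partition a x ts xs \<and> mesh_less ts d1 \<longrightarrow>
        \<bar>tagsum f h ts xs - ?Fx\<bar> < \<eta>/2"
    using Ix eta unfolding has_RS_integral_def tagsum_def by (meson half_gt_zero)
  obtain d2 where d2: "d2 > 0" "\<forall>ts xs. is_tagged_partition a y ts xs \<and> mesh_less ts d2 \<longrightarrow>
        \<bar>tagsum f h ts xs - ?Fy\<bar> < \<eta>/2"
    using Iy eta unfolding has_RS_integral_def tagsum_def by (meson half_gt_zero)
  obtain ts where ts: "is_partition a x ts" "mesh_less ts (min d1 d2)"
    using partition_exists[OF _ xy(1), of "min d1 d2"] d1 d2 by auto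
  obtain ss where ss: "is_partition x y ss" "mesh_less ss d2"
    using partition_exists[OF d2(1) xy(2)] by auto
  have tsm: "mesh_less ts d1" "mesh_less ts d2" using ts(2) mesh_mono by fastforce+
  have us: "is_partition a y (ts @ tl ss)" "mesh_less (ts @ tl ss) d2"
    using partition_concat(1)[OF ts(1) ss(1)] mesh_concat[OF ts(1) ss(1) tsm(2) ss(2)] by auto
  have A: "\<bar>lsum f h ts - ?Fx\<bar> < \<eta>/2"
    using d1(2) left_tagged[OF ts(1)] tsm(1) by metis
  have B: "\<bar>lsum f h (ts @ tl ss) - ?Fy\<bar> < \<eta>/2"
    using d2(2) left_tagged[OF us(1)] us(2) by metis
  have C: "lsum f h (ts @ tl ss) = lsum f h ts + lsum f h ss" by (rule lsum_concat[OF ts(1) ss(1)])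
  have D: "\<bar>lsum f h ss - f x * (h y - h x)\<bar> \<le> \<epsilon> * (W y - W x)"
    by (rule single_interval[OF uc ctl]) (use ss(1) xy in \<open>auto simp: is_partition_def\<close>)
  show "\<bar>?Fy - ?Fx - f x * (h y - h x)\<bar> \<le> \<epsilon> * (W y - W x) + \<eta>"
    using A B C D by (simp add: abs_if split: if_splits)
qed

lemma RS_cont:
  assumes ab: "a \<le> b" and fc: "continuous_on {a..b} f" and hc: "continuous_on {a..b} h"
    and ctl: "control h W a b"
  shows "continuous_on {a..b} (\<lambda>t. RS_integral f h a t)"
proof -
  define F where "F t = RS_integral f h a t" for t
  define D where "D = W b - W a"
  have D0: "0 \<le> D" using control_W[OF ctl order.refl ab order.refl] by (simp add: D_def)
  have "compact (f ` {a..b})" by (rule compact_continuous_image[OF fc]) simp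
  then obtain M where M: "M > 0" "\<forall>u\<in>{a..b}. \<bar>f u\<bar> \<le> M"
    using compact_imp_bounded bounded_pos by (metis image_eqI real_norm_def)
  have "\<exists>d>0. \<forall>y\<in>{a..b}. dist y x < d \<longrightarrow> dist (F y) (F x) < e"
    if x: "x \<in> {a..b}" and e: "e > 0" for x e
  proof -
    define \<epsilon> where "\<epsilon> = e / (2 * (D + 1))"
    have e0: "\<epsilon> > 0" using e D0 by (simp add: \<epsilon>_def)
    have eD: "\<epsilon> * D < e / 2" using e D0 by (simp add: \<epsilon>_def field_simps)
    obtain \<delta> where d: "\<delta> > 0" "ucont f a b \<delta> \<epsilon>" using ucont_exists[OF fc e0] by blast
    have "e / (2 * M) > 0" using e M by simp
    then obtain d' where d': "d' > 0" "\<forall>y\<in>{a..b}. dist y x < d' \<longrightarrow> dist (h y) (h x) < e / (2 * M)"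
      using hc x unfolding continuous_on_iff by blast
    have gen: "\<bar>F v - F u\<bar> < e" if uv: "a \<le> u" "u \<le> v" "v \<le> b" "v - u < \<delta>"
        and hh: "\<bar>h v - h u\<bar> < e / (2 * M)" for u v
    proof -
      have I: "\<bar>F v - F u - f u * (h v - h u)\<bar> \<le> \<epsilon> * (W v - W u)"
        unfolding F_def by (rule RS_incr[OF fc ctl d(2) uv])
      have "W a \<le> W u" "W v \<le> W b" using control_W[OF ctl] uv by auto
      then have "\<epsilon> * (W v - W u) \<le> \<epsilon> * D" using e0 by (intro mult_left_mono) (auto simp: D_def)
      moreover have "\<bar>f u * (h v - h u)\<bar> \<le> M * (e / (2 * M))"
        unfolding abs_mult using M uv hh by (intro mult_mono) auto
      moreover have "M * (e / (2 * M)) = e / 2" using M by simp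
      moreover have "\<bar>F v - F u\<bar> \<le> \<bar>F v - F u - f u * (h v - h u)\<bar> + \<bar>f u * (h v - h u)\<bar>"
        using abs_triangle_ineq[of "F v - F u - f u * (h v - h u)" "f u * (h v - h u)"] by simp
      ultimately show ?thesis using I eD by linarith
    qed
    have "dist (F y) (F x) < e" if y: "y \<in> {a..b}" "dist y x < min \<delta> d'" for y
    proof (cases "x \<le> y")
      case True
      have "\<bar>h y - h x\<bar> < e / (2 * M)" using d'(2) y by (simp add: dist_real_def)
      moreover have "y - x < \<delta>" using y True by (simp add: dist_real_def)
      ultimately show ?thesis using gen[of x y] x y True by (simp add: dist_real_def)
    next
      case False
      have "\<bar>h y - h x\<bar> < e / (2 * M)" using d'(2) y by (simp add: dist_real_def)
      then have "\<bar>h x - h y\<bar> < e / (2 * M)" by (simp add: abs_minus_commute)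
      moreover have "x - y < \<delta>" using y False by (simp add: dist_real_def)
      ultimately show ?thesis using gen[of y x] x y False by (simp add: dist_real_def abs_minus_commute)
    qed
    then show ?thesis using d(1) d'(1) by (metis min_less_iff_conj)
  qed
  then show ?thesis unfolding continuous_on_iff F_def by blast
qed

definition vsum :: "(real \<Rightarrow> 'a::real_normed_vector) \<Rightarrow> real list \<Rightarrow> real" where
  "vsum g ts = isum (\<lambda>u v. norm (g v - g u)) ts"

lemma variation_sums_eq: "variation_sums g a b = vsum g ` {ts. is_partition a b ts}"
  unfolding variation_sums_def vsum_def isum_conv ..

lemma vsum_snoc:
  assumes "is_partition a x ts" "x \<le> y"
  shows "vsum g (ts @ tl [x, y]) = vsum g ts + norm (g y - g x)"
proof -
  have e1: "butlast ts @ [x] = ts" using assms(1) unfolding is_partition_def by (metis append_butlast_last_id)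
  have "isum (\<lambda>u v. norm (g v - g u)) (butlast ts @ [x]) + isum (\<lambda>u v. norm (g v - g u)) [x, y]
      = isum (\<lambda>u v. norm (g v - g u)) (butlast ts @ [x, y])"
    using isum_append[of "\<lambda>u v. norm (g v - g u)" "butlast ts" x "[y]"] by simp
  then have "vsum g ts + norm (g y - g x) = vsum g (butlast ts @ [x, y])"
    unfolding vsum_def e1 by simp
  moreover have "butlast ts @ [x, y] = ts @ tl [x, y]" using e1 by (metis append.assoc append_Cons append_Nil list.sel(3))
  ultimately show ?thesis by simp
qed

lemma partition_two: "x < y \<Longrightarrow> is_partition x y [x, y]"
  by (simp add: is_partition_def)

lemma vs_nonempty: "a \<le> x \<Longrightarrow> variation_sums g a x \<noteq> {}"
proof -
  assume ax: "a \<le> x"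
  have "\<exists>ts. is_partition a x ts"
  proof (cases "a = x")
    case True
    then show ?thesis by (intro exI[of _ "[a]"]) (simp add: is_partition_def)
  next
    case False
    then show ?thesis using ax partition_two by (metis order_less_le)
  qed
  then show ?thesis unfolding variation_sums_eq by blast
qed

lemma vs_bdd:
  assumes bv: "has_bounded_variation_on g a b" and x: "a \<le> x" "x \<le> b"
  shows "bdd_above (variation_sums g a x)"
proof (cases "x = b")
  case True
  then show ?thesis using bv unfolding has_bounded_variation_on_def by simp
next
  case False
  then have xb: "x < b" using x by simp
  obtain B where B: "\<forall>s\<in>variation_sums g a b. s \<le> B"
    using bv unfolding has_bounded_variation_on_def bdd_above_def by blast
  have "s \<le> B" if sx: "s \<in> variation_sums g a x" for s
  proof -
    obtain ts where ts: "is_partition a x ts" "s = vsum g ts" using sx unfolding variation_sums_eq by blast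
    have p: "is_partition a b (ts @ tl [x, b])" using partition_concat(1)[OF ts(1) partition_two[OF xb]] .
    have "vsum g (ts @ tl [x, b]) \<in> variation_sums g a b" using p unfolding variation_sums_eq by blast
    moreover have "vsum g (ts @ tl [x, b]) = s + norm (g b - g x)" using vsum_snoc[OF ts(1) less_imp_le[OF xb], of g] ts(2) by simp
    ultimately have "s + norm (g b - g x) \<le> B" using B by metis
    then show ?thesis using norm_ge_zero[of "g b - g x"] by linarith
  qed
  then show ?thesis unfolding bdd_above_def by blast
qed

lemma V_step:
  assumes bv: "has_bounded_variation_on g a b" and xy: "a \<le> x" "x \<le> y" "y \<le> b"
  shows "path_length g a x + norm (g y - g x) \<le> path_length g a y"
proof (cases "x = y")
  case True
  then show ?thesis by simp
next
  case False
  then have xy': "x < y" using xy by simp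
  have bd: "bdd_above (variation_sums g a y)" using vs_bdd[OF bv] xy by auto
  have "s \<le> path_length g a y - norm (g y - g x)" if sx: "s \<in> variation_sums g a x" for s
  proof -
    obtain ts where ts: "is_partition a x ts" "s = vsum g ts" using sx unfolding variation_sums_eq by blast
    have p: "is_partition a y (ts @ tl [x, y])" using partition_concat(1)[OF ts(1) partition_two[OF xy']] .
    have "vsum g (ts @ tl [x, y]) \<in> variation_sums g a y" using p unfolding variation_sums_eq by blast
    then have "vsum g (ts @ tl [x, y]) \<le> path_length g a y" unfolding path_length_def
      using bd by (rule cSup_upper)
    moreover have "vsum g (ts @ tl [x, y]) = s + norm (g y - g x)" using vsum_snoc[OF ts(1) less_imp_le[OF xy'], of g] ts(2) by simp
    ultimately show ?thesis by simp
  qed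
  then have "path_length g a x \<le> path_length g a y - norm (g y - g x)"
    unfolding path_length_def using vs_nonempty[OF xy(1)] by (intro cSup_least) auto
  then show ?thesis by simp
qed

lemma V_a: "path_length g a a = 0"
proof -
  have "{ts. is_partition a a ts} = {[a]}" using partition_single by (auto simp: is_partition_def)
  then have "variation_sums g a a = {0}"
    unfolding variation_sums_eq by (simp add: vsum_def)
  then show ?thesis unfolding path_length_def by simp
qed

lemma V_nonneg:
  assumes bv: "has_bounded_variation_on g a b" and x: "a \<le> x" "x \<le> b"
  shows "0 \<le> path_length g a x"
  using V_step[OF bv order.refl x] V_a[of g a] norm_ge_zero[of "g x - g a"] by linarith

lemma V_control:
  fixes g :: "real \<Rightarrow> 'a::euclidean_space"
  assumes bv: "has_bounded_variation_on g a b" and e: "e \<in> Basis"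
  shows "control (\<lambda>u. g u \<bullet> e) (path_length g a) a b"
  unfolding control_def
proof (intro allI impI)
  fix x y assume xy: "a \<le> x" "x \<le> y" "y \<le> b"
  have "\<bar>g y \<bullet> e - g x \<bullet> e\<bar> = \<bar>(g y - g x) \<bullet> e\<bar>" by (simp add: inner_diff_left)
  also have "\<dots> \<le> norm (g y - g x)" by (rule Basis_le_norm[OF e])
  finally show "\<bar>g y \<bullet> e - g x \<bullet> e\<bar> \<le> path_length g a y - path_length g a x"
    using V_step[OF bv xy] by simp
qed

lemma pow_ineq:
  fixes p q :: real
  assumes "0 \<le> p" "p \<le> q"
  shows "p ^ k * (q - p) \<le> (q ^ Suc k - p ^ Suc k) / real (Suc k)"
proof -
  have "(\<Sum>j<Suc k. p ^ k) \<le> (\<Sum>j<Suc k. q ^ j * p ^ (k - j))"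
  proof (rule sum_mono)
    fix j assume "j \<in> {..<Suc k}"
    then have "j \<le> k" by simp
    have "p ^ k = p ^ j * p ^ (k - j)" using \<open>j \<le> k\<close> by (simp add: power_add[symmetric])
    also have "\<dots> \<le> q ^ j * p ^ (k - j)" using assms by (intro mult_right_mono power_mono) auto
    finally show "p ^ k \<le> q ^ j * p ^ (k - j)" .
  qed
  then have "real (Suc k) * p ^ k \<le> (\<Sum>j<Suc k. q ^ j * p ^ (k - j))" by simp
  then have "(q - p) * (real (Suc k) * p ^ k) \<le> (q - p) * (\<Sum>j<Suc k. q ^ j * p ^ (k - j))"
    using assms by (intro mult_left_mono) auto
  also have "\<dots> = q ^ Suc k - p ^ Suc k" by (rule diff_power_eq_sum[symmetric])
  finally show ?thesis by (simp add: field_simps)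
qed

lemma L2_set_abs: "L2_set (\<lambda>i. \<bar>f i\<bar>) A = L2_set f A"
  unfolding L2_set_def by simp

lemma L2_norm_basis:
  fixes x :: "'a::euclidean_space"
  shows "L2_set (\<lambda>e. x \<bullet> e) Basis = norm x"
  using euclidean_dist_l2[of x 0] by (simp add: dist_real_def L2_set_abs)

lemma L2_prod:
  assumes "finite B" "finite W"
  shows "L2_set (\<lambda>(e, w). p w * q e) (B \<times> W) = L2_set q B * L2_set p W"
proof -
  have "(\<Sum>e\<in>B. \<Sum>w\<in>W. (q e)\<^sup>2 * (p w)\<^sup>2) = (\<Sum>x\<in>B \<times> W. ((\<lambda>(e, w). p w * q e) x)\<^sup>2)"
    unfolding sum.cartesian_product by (intro sum.cong) (auto simp: power_mult_distrib)
  then have "(\<Sum>x\<in>B \<times> W. ((\<lambda>(e, w). p w * q e) x)\<^sup>2) = (\<Sum>e\<in>B. \<Sum>w\<in>W. (q e)\<^sup>2 * (p w)\<^sup>2)"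
    by simp
  also have "\<dots> = (\<Sum>e\<in>B. (q e)\<^sup>2) * (\<Sum>w\<in>W. (p w)\<^sup>2)" by (simp add: sum_product)
  finally show ?thesis unfolding L2_set_def by (simp add: real_sqrt_mult)
qed

lemma L2_isum: "L2_set (\<lambda>j. isum (F j) ts) A \<le> isum (\<lambda>u v. L2_set (\<lambda>j. F j u v) A) ts"
proof (induction ts rule: induct_list012)
  case (3 x y zs)
  have "L2_set (\<lambda>j. isum (F j) (x # y # zs)) A = L2_set (\<lambda>j. F j x y + isum (F j) (y # zs)) A" by simp
  also have "\<dots> \<le> L2_set (\<lambda>j. F j x y) A + L2_set (\<lambda>j. isum (F j) (y # zs)) A"
    by (rule L2_set_triangle_ineq)
  finally show ?case using 3(2) by simp
qed (simp_all add: L2_set_def)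

lemma finite_delta:
  fixes P :: "'j \<Rightarrow> real \<Rightarrow> bool"
  assumes "finite A" "\<forall>j\<in>A. \<exists>d>0. P j d" "\<And>j d d'. P j d \<Longrightarrow> 0 < d' \<Longrightarrow> d' \<le> d \<Longrightarrow> P j d'"
  shows "\<exists>d>0. \<forall>j\<in>A. P j d"
  using assms(1,2)
proof (induction A rule: finite_induct)
  case empty
  then show ?case by (intro exI[of _ 1]) simp
next
  case (insert x F)
  then obtain d1 where d1: "d1 > 0" "\<forall>j\<in>F. P j d1" by auto
  obtain d2 where d2: "d2 > 0" "P x d2" using insert by auto
  have "\<forall>j\<in>insert x F. P j (min d1 d2)"
    using d1 d2 assms(3) by (auto simp: min_def)
  then show ?case using d1 d2 by (intro exI[of _ "min d1 d2"]) auto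
qed

lemma L2_limit:
  assumes fin: "finite A" and at: "a \<le> t"
    and I: "\<And>j. j \<in> A \<Longrightarrow> has_RS_integral (f j) (h j) a t (I j)"
    and B: "\<And>ts. is_partition a t ts \<Longrightarrow> L2_set (\<lambda>j. lsum (f j) (h j) ts) A \<le> B"
  shows "L2_set I A \<le> B"
proof (rule field_le_epsilon)
  fix \<eta> :: real assume eta: "\<eta> > 0"
  define \<epsilon> where "\<epsilon> = \<eta> / (sqrt (real (card A)) + 1)"
  have e0: "\<epsilon> > 0" using eta by (simp add: \<epsilon>_def add_nonneg_pos)
  have "sqrt (real (card A)) + 1 \<noteq> 0" proof -
    have "0 \<le> sqrt (real (card A))" by simp
    then show ?thesis by linarith
  qed
  then have "(sqrt (real (card A)) + 1) * \<epsilon> = \<eta>" unfolding \<epsilon>_def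
    by simp
  moreover have "sqrt (real (card A)) * \<epsilon> \<le> (sqrt (real (card A)) + 1) * \<epsilon>" using e0 by simp
  ultimately have ce: "sqrt (real (card A)) * \<epsilon> \<le> \<eta>" by linarith
  let ?P = "\<lambda>j d. \<forall>ts xs. is_tagged_partition a t ts xs \<and> mesh_less ts d \<longrightarrow> \<bar>tagsum (f j) (h j) ts xs - I j\<bar> < \<epsilon>"
  have "\<forall>j\<in>A. \<exists>d>0. ?P j d" using I e0 unfolding has_RS_integral_def tagsum_def by blast
  moreover have "?P j d'" if P: "?P j d" and dd: "0 < d'" "d' \<le> d" for j d d'
  proof (intro allI impI)
    fix ts xs assume tx: "is_tagged_partition a t ts xs \<and> mesh_less ts d'"
    then have "mesh_less ts d" using mesh_mono dd(2) by blast
    then show "\<bar>tagsum (f j) (h j) ts xs - I j\<bar> < \<epsilon>" using P tx by blast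
  qed
  ultimately have "\<exists>d>0. \<forall>j\<in>A. ?P j d" by (rule finite_delta[OF fin])
  then obtain d where d: "d > 0" "\<forall>j\<in>A. ?P j d" by blast
  obtain ts where ts: "is_partition a t ts" "mesh_less ts d" using partition_exists[OF d(1) at] by blast
  have cl: "\<bar>lsum (f j) (h j) ts - I j\<bar> < \<epsilon>" if j: "j \<in> A" for j
  proof -
    have "?P j d" using d(2) j by blast
    then have "\<bar>tagsum (f j) (h j) ts (butlast ts) - I j\<bar> < \<epsilon>" using left_tagged(1)[OF ts(1)] ts(2) by blast
    then show ?thesis using left_tagged(2)[OF ts(1)] by simp
  qed
  have "L2_set I A = L2_set (\<lambda>j. lsum (f j) (h j) ts + (I j - lsum (f j) (h j) ts)) A" by simp
  also have "\<dots> \<le> L2_set (\<lambda>j. lsum (f j) (h j) ts) A + L2_set (\<lambda>j. I j - lsum (f j) (h j) ts) A"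
    by (rule L2_set_triangle_ineq)
  also have "L2_set (\<lambda>j. I j - lsum (f j) (h j) ts) A = L2_set (\<lambda>j. \<bar>I j - lsum (f j) (h j) ts\<bar>) A"
    by (simp add: L2_set_abs)
  also have "\<dots> \<le> L2_set (\<lambda>j. \<epsilon>) A"
    using cl by (intro L2_set_mono) (auto simp: abs_minus_commute less_imp_le)
  also have "\<dots> = sqrt (real (card A)) * \<epsilon>" using e0 by (simp add: L2_set_constant)
  finally show "L2_set I A \<le> B + \<eta>" using B[OF ts(1)] ce by linarith
qed

definition Wd :: "nat \<Rightarrow> 'a::euclidean_space list set" where
  "Wd k = {w. set w \<subseteq> Basis \<and> length w = k}"

lemma Wd_finite: "finite (Wd k)"
  unfolding Wd_def by (rule finite_lists_length_eq[OF finite_Basis])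

lemma Wd_0: "Wd 0 = {[]}"
  unfolding Wd_def by auto

lemma Wd_Suc: "Wd (Suc k) = (\<lambda>(e, w). e # w) ` (Basis \<times> Wd k)"
  unfolding Wd_def by (auto simp: image_iff length_Suc_conv)

lemma Wd_inj: "inj_on (\<lambda>(e, w). e # w) (Basis \<times> Wd k)"
  by (auto simp: inj_on_def)

lemma Wd_rev: "rev ` Wd k = Wd k"
proof
  show "rev ` Wd k \<subseteq> Wd k" by (auto simp: Wd_def)
  show "Wd k \<subseteq> rev ` Wd k"
  proof
    fix w assume "w \<in> Wd k"
    then have "rev w \<in> Wd k" by (auto simp: Wd_def)
    then have "rev (rev w) \<in> rev ` Wd k" by (rule imageI)
    then show "w \<in> rev ` Wd k" by simp
  qed
qed

lemma sig_bound:
  fixes g :: "real \<Rightarrow> 'a::euclidean_space"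
  assumes ab: "a \<le> b" and gc: "continuous_on {a..b} g" and bv: "has_bounded_variation_on g a b"
  shows "(\<forall>w\<in>Wd k. continuous_on {a..b} (sig_rev g a w)) \<and>
    (\<forall>t\<in>{a..b}. L2_set (\<lambda>w. sig_rev g a w t) (Wd k) \<le> path_length g a t ^ k / fact k)"
proof (induction k)
  case 0
  show ?case by (simp add: Wd_0 L2_set_def)
next
  case (Suc k)
  let ?V = "path_length g a"
  have hc: "continuous_on {a..b} (\<lambda>u. g u \<bullet> e)" for e
    by (intro continuous_intros gc)
  have ctl: "control (\<lambda>u. g u \<bullet> e) ?V a b" if "e \<in> Basis" for e
    by (rule V_control[OF bv that])
  have sr: "sig_rev g a (e # w) = (\<lambda>t. RS_integral (sig_rev g a w) (\<lambda>u. g u \<bullet> e) a t)" for e w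
    by (rule ext) simp
  have cont: "\<forall>w\<in>Wd (Suc k). continuous_on {a..b} (sig_rev g a w)"
  proof
    fix w' :: "'a list" assume "w' \<in> Wd (Suc k)"
    then obtain e w where ew: "e \<in> Basis" "w \<in> Wd k" "w' = e # w" unfolding Wd_Suc by auto
    show "continuous_on {a..b} (sig_rev g a w')"
      unfolding ew(3) sr using RS_cont[OF ab _ hc ctl[OF ew(1)]] Suc.IH ew(2) by blast
  qed
  have bound: "L2_set (\<lambda>w. sig_rev g a w t) (Wd (Suc k)) \<le> ?V t ^ Suc k / fact (Suc k)"
    if t: "t \<in> {a..b}" for t
  proof -
    have "L2_set (\<lambda>w. sig_rev g a w t) (Wd (Suc k)) = L2_set (\<lambda>(e, w). sig_rev g a (e # w) t) (Basis \<times> Wd k)"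
      unfolding Wd_Suc L2_set_def using sum.reindex[OF Wd_inj, of "\<lambda>w. (sig_rev g a w t)\<^sup>2"]
      by (simp add: case_prod_beta)
    also have "\<dots> \<le> ?V t ^ Suc k / fact (Suc k)"
    proof (rule L2_limit[where f = "\<lambda>(e, w). sig_rev g a w" and h = "\<lambda>(e, w) u. g u \<bullet> e"])
      show "finite (Basis \<times> Wd k)" by (intro finite_cartesian_product finite_Basis Wd_finite)
      show "a \<le> t" using t by simp
      fix j :: "'a \<times> 'a list" assume j: "j \<in> Basis \<times> Wd k"
      then obtain e w where ew: "j = (e, w)" "e \<in> Basis" "w \<in> Wd k" by auto
      have "has_RS_integral (sig_rev g a w) (\<lambda>u. g u \<bullet> e) a t (RS_integral (sig_rev g a w) (\<lambda>u. g u \<bullet> e) a t)"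
        using RS_has[of a t b "sig_rev g a w" "\<lambda>u. g u \<bullet> e" ?V] t Suc.IH ew ctl by auto
      then show "has_RS_integral ((\<lambda>(e, w). sig_rev g a w) j) ((\<lambda>(e, w) u. g u \<bullet> e) j) a t
          ((\<lambda>(e, w). sig_rev g a (e # w) t) j)" using ew by simp
    next
      fix ts assume ts: "is_partition a t ts"
      have rng: "u \<in> {a..b}" if "u \<in> set ts" for u using partition_range[OF ts that] t by auto
      have "L2_set (\<lambda>j. lsum ((\<lambda>(e, w). sig_rev g a w) j) ((\<lambda>(e, w) u. g u \<bullet> e) j) ts) (Basis \<times> Wd k)
          = L2_set (\<lambda>j. isum (\<lambda>u v. (case j of (e, w) \<Rightarrow> sig_rev g a w u * ((g v - g u) \<bullet> e))) ts) (Basis \<times> Wd k)"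
        unfolding lsum_def by (intro L2_set_cong refl) (auto simp: inner_diff_left)
      also have "\<dots> \<le> isum (\<lambda>u v. L2_set (\<lambda>j. case j of (e, w) \<Rightarrow> sig_rev g a w u * ((g v - g u) \<bullet> e)) (Basis \<times> Wd k)) ts"
        by (rule L2_isum)
      also have "\<dots> = isum (\<lambda>u v. norm (g v - g u) * L2_set (\<lambda>w. sig_rev g a w u) (Wd k)) ts"
      proof -
        have pt: "L2_set (\<lambda>j. case j of (e, w) \<Rightarrow> sig_rev g a w u * ((g v - g u) \<bullet> e)) (Basis \<times> Wd k)
            = norm (g v - g u) * L2_set (\<lambda>w. sig_rev g a w u) (Wd k)" for u v
          using L2_prod[OF finite_Basis Wd_finite, of "\<lambda>w. sig_rev g a w u" "\<lambda>e. (g v - g u) \<bullet> e" k]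
            L2_norm_basis[of "g v - g u"] by simp
        show ?thesis unfolding pt ..
      qed
      also have "\<dots> \<le> isum (\<lambda>u v. (?V v ^ Suc k - ?V u ^ Suc k) / fact (Suc k)) ts"
      proof (rule isum_le, rule consec_mono[OF consec_sorted[OF partition_sorted[OF ts]]])
        fix u v assume uv: "u \<in> set ts" "v \<in> set ts" "u < v"
        have ub: "u \<in> {a..b}" "v \<in> {a..b}" using rng uv by auto
        have n1: "norm (g v - g u) \<le> ?V v - ?V u" using V_step[OF bv, of u v] ub uv(3) by auto
        have n2: "L2_set (\<lambda>w. sig_rev g a w u) (Wd k) \<le> ?V u ^ k / fact k" using Suc.IH ub by blast
        have V0: "0 \<le> ?V u" using V_nonneg[OF bv] ub by auto
        have Vuv: "?V u \<le> ?V v" using n1 norm_ge_zero[of "g v - g u"] by linarith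
        have "norm (g v - g u) * L2_set (\<lambda>w. sig_rev g a w u) (Wd k) \<le> (?V v - ?V u) * (?V u ^ k / fact k)"
          by (rule mult_mono[OF n1 n2]) (use Vuv in auto)
        also have "\<dots> = (?V u ^ k * (?V v - ?V u)) / fact k" by simp
        also have "\<dots> \<le> ((?V v ^ Suc k - ?V u ^ Suc k) / real (Suc k)) / fact k"
          by (rule divide_right_mono[OF pow_ineq[OF V0 Vuv]]) simp
        also have "\<dots> = (?V v ^ Suc k - ?V u ^ Suc k) / fact (Suc k)"
          by (simp add: fact_Suc field_simps)
        finally show "norm (g v - g u) * L2_set (\<lambda>w. sig_rev g a w u) (Wd k) \<le> (?V v ^ Suc k - ?V u ^ Suc k) / fact (Suc k)" .
      qed
      also have "\<dots> = ?V t ^ Suc k / fact (Suc k)"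
      proof -
        have ne: "ts \<noteq> []" "hd ts = a" "last ts = t" using ts by (auto simp: is_partition_def)
        have "isum (\<lambda>u v. (?V v ^ Suc k - ?V u ^ Suc k) / fact (Suc k)) ts
            = isum (\<lambda>u v. ?V v ^ Suc k / fact (Suc k) - ?V u ^ Suc k / fact (Suc k)) ts"
          by (simp add: diff_divide_distrib)
        also have "\<dots> = ?V t ^ Suc k / fact (Suc k)"
          using isum_tele[OF ne(1), of "\<lambda>v. ?V v ^ Suc k / fact (Suc k)"] ne V_a[of g a] by simp
        finally show ?thesis .
      qed
      finally show "L2_set (\<lambda>j. lsum ((\<lambda>(e, w). sig_rev g a w) j) ((\<lambda>(e, w) u. g u \<bullet> e) j) ts) (Basis \<times> Wd k)
          \<le> ?V t ^ Suc k / fact (Suc k)" .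
    qed
    finally show ?thesis .
  qed
  show ?case using cont bound by blast
qed

lemma exp_like_summable:
  fixes y A :: real
  shows "summable (\<lambda>n. A * (y ^ n / fact n))"
  using summable_mult[OF summable_exp[of y], of A] by (simp add: field_simps)

lemma g_summable:
  fixes x C :: real assumes C: "0 \<le> C"
  shows "summable (\<lambda>n. \<bar>x\<bar> ^ n * C ^ (n + k) / (fact n * fact (n + k)))"
proof (rule summable_comparison_test[OF _ exp_like_summable[of "C ^ k" "\<bar>x\<bar> * C"]])
  show "\<exists>N. \<forall>n\<ge>N. norm (\<bar>x\<bar> ^ n * C ^ (n + k) / (fact n * fact (n + k))) \<le> C ^ k * ((\<bar>x\<bar> * C) ^ n / fact n)"
  proof (intro exI allI impI)
    fix n :: nat
    have f1: "(1::real) \<le> fact (n + k)" by simp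
    have nn: "0 \<le> \<bar>x\<bar> ^ n * C ^ (n + k) / fact n" using C by simp
    have "\<bar>x\<bar> ^ n * C ^ (n + k) / (fact n * fact (n + k)) = (\<bar>x\<bar> ^ n * C ^ (n + k) / fact n) / fact (n + k)"
      by simp
    also have "\<dots> \<le> (\<bar>x\<bar> ^ n * C ^ (n + k) / fact n) / 1"
      using nn f1 by (intro divide_left_mono) auto
    also have "\<dots> = \<bar>x\<bar> ^ n * C ^ (n + k) / fact n" by simp
    also have "\<dots> = C ^ k * ((\<bar>x\<bar> * C) ^ n / fact n)" by (simp add: power_add power_mult_distrib)
    finally show "norm (\<bar>x\<bar> ^ n * C ^ (n + k) / (fact n * fact (n + k))) \<le> C ^ k * ((\<bar>x\<bar> * C) ^ n / fact n)"
      using C by simp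
  qed
qed

lemma diffs_pow: "(diffs ^^ k) (c :: nat \<Rightarrow> real) = (\<lambda>n. fact (n + k) / fact n * c (n + k))"
proof (induction k)
  case 0
  then show ?case by (simp add: fun_eq_iff)
next
  case (Suc k)
  show ?case
  proof
    fix n
    have "(diffs ^^ Suc k) c n = diffs ((diffs ^^ k) c) n" by simp
    also have "\<dots> = of_nat (Suc n) * (diffs ^^ k) c (Suc n)" by (simp only: diffs_def)
    also have "\<dots> = of_nat (Suc n) * (fact (Suc n + k) / fact (Suc n) * c (Suc n + k))"
      by (simp only: Suc)
    also have "\<dots> = fact (n + Suc k) / fact n * c (n + Suc k)"
    proof -
      have e: "Suc n + k = n + Suc k" by simp
      have m: "(of_nat (Suc n) :: real) \<noteq> 0" "(fact n :: real) \<noteq> 0" by auto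
      have g: "mm * (A / (mm * B) * C) = A / B * C" if "mm \<noteq> 0" "B \<noteq> 0" for mm A B C :: real
        using that by (simp add: field_simps)
      show ?thesis unfolding e fact_Suc[of n] by (rule g[OF m])
    qed
    finally show "(diffs ^^ Suc k) c n = fact (n + Suc k) / fact n * c (n + Suc k)" .
  qed
qed

lemma term_bound:
  fixes c :: "nat \<Rightarrow> real"
  assumes cb: "\<And>n. \<bar>c n\<bar> \<le> C ^ n / (fact n)\<^sup>2"
  shows "\<bar>fact (n + k) / fact n * c (n + k) * y ^ n\<bar> \<le> \<bar>y\<bar> ^ n * C ^ (n + k) / (fact n * fact (n + k))"
proof -
  have "\<bar>fact (n + k) / fact n * c (n + k) * y ^ n\<bar> = fact (n + k) / fact n * (\<bar>c (n + k)\<bar> * \<bar>y\<bar> ^ n)"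
    by (simp add: abs_mult power_abs)
  also have "\<dots> \<le> fact (n + k) / fact n * (C ^ (n + k) / (fact (n + k))\<^sup>2 * \<bar>y\<bar> ^ n)"
    by (intro mult_left_mono mult_right_mono cb) auto
  also have "\<dots> = \<bar>y\<bar> ^ n * C ^ (n + k) / (fact n * fact (n + k))"
    by (simp add: power2_eq_square field_simps)
  finally show ?thesis .
qed

lemma series_facts:
  fixes c :: "nat \<Rightarrow> real" and f :: "real \<Rightarrow> real"
  assumes cb: "\<And>n. \<bar>c n\<bar> \<le> C ^ n / (fact n)\<^sup>2" and C: "0 \<le> C"
    and f: "f = (\<lambda>x. \<Sum>n. x ^ n * c n)"
  shows "(deriv ^^ k) f = (\<lambda>x. \<Sum>n. (diffs ^^ k) c n * x ^ n)"
    and "((deriv ^^ k) f has_field_derivative (\<Sum>n. (diffs ^^ Suc k) c n * x ^ n)) (at x)"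
proof -
  have sm: "summable (\<lambda>n. (diffs ^^ k) c n * y ^ n)" for k y
  proof (rule summable_comparison_test[OF _ g_summable[OF C, of y k]])
    show "\<exists>N. \<forall>n\<ge>N. norm ((diffs ^^ k) c n * y ^ n) \<le> \<bar>y\<bar> ^ n * C ^ (n + k) / (fact n * fact (n + k))"
      unfolding diffs_pow using term_bound[OF cb] by auto
  qed
  have D: "((\<lambda>x. \<Sum>n. (diffs ^^ k) c n * x ^ n) has_field_derivative (\<Sum>n. (diffs ^^ Suc k) c n * x ^ n)) (at x)" for k x
    using termdiffs_strong_converges_everywhere[OF sm, of k x] by simp
  show E: "(deriv ^^ k) f = (\<lambda>x. \<Sum>n. (diffs ^^ k) c n * x ^ n)" for k
  proof (induction k)
    case 0
    then show ?case using f by (simp add: mult.commute)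
  next
    case (Suc k)
    show ?case
      by (rule ext) (simp add: Suc DERIV_imp_deriv[OF D])
  qed
  show "((deriv ^^ k) f has_field_derivative (\<Sum>n. (diffs ^^ Suc k) c n * x ^ n)) (at x)"
    unfolding E by (rule D)
qed

lemma L2_coord:
  "L2_set (\<lambda>w. sig_coord g a w s) (Wd k) = L2_set (\<lambda>w. sig_rev g a w s) (Wd k)"
proof -
  have "(\<Sum>w\<in>Wd k. (sig_rev g a (rev w) s)\<^sup>2) = (\<Sum>w\<in>rev ` Wd k. (sig_rev g a w s)\<^sup>2)"
    by (rule sum.reindex[OF inj_on_inverseI[of _ rev], symmetric, unfolded comp_def]) simp
  also have "\<dots> = (\<Sum>w\<in>Wd k. (sig_rev g a w s)\<^sup>2)" unfolding Wd_rev ..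
  finally show ?thesis unfolding L2_set_def sig_coord_def by simp
qed

lemma coeff_bound:
  fixes \<gamma> \<sigma> :: "real \<Rightarrow> 'a::euclidean_space"
  assumes ab: "a \<le> b"
    and "continuous_on {a..b} \<gamma>" "continuous_on {a..b} \<sigma>"
    and "has_bounded_variation_on \<gamma> a b" "has_bounded_variation_on \<sigma> a b"
    and "s \<in> {a..b}" "t \<in> {a..b}"
  shows "\<bar>sig_inner \<gamma> \<sigma> a s t n\<bar> \<le> (path_length \<gamma> a s * path_length \<sigma> a t) ^ n / (fact n)\<^sup>2"
proof -
  have Wd: "{w. set w \<subseteq> Basis \<and> length w = n} = Wd n" by (simp add: Wd_def)
  have "\<bar>sig_inner \<gamma> \<sigma> a s t n\<bar> \<le> (\<Sum>w\<in>Wd n. \<bar>sig_coord \<gamma> a w s\<bar> * \<bar>sig_coord \<sigma> a w t\<bar>)"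
    unfolding sig_inner_def Wd by (rule order_trans[OF sum_abs]) (simp add: abs_mult)
  also have "\<dots> \<le> L2_set (\<lambda>w. sig_coord \<gamma> a w s) (Wd n) * L2_set (\<lambda>w. sig_coord \<sigma> a w t) (Wd n)"
    by (rule L2_set_mult_ineq)
  also have "\<dots> = L2_set (\<lambda>w. sig_rev \<gamma> a w s) (Wd n) * L2_set (\<lambda>w. sig_rev \<sigma> a w t) (Wd n)"
    unfolding L2_coord ..
  also have "\<dots> \<le> (path_length \<gamma> a s ^ n / fact n) * (path_length \<sigma> a t ^ n / fact n)"
    using sig_bound[OF ab assms(2,4), of n] sig_bound[OF ab assms(3,5), of n] assms(6,7)
      V_nonneg[OF assms(4), of s] V_nonneg[OF assms(5), of t]
    by (intro mult_mono) auto
  also have "\<dots> = (path_length \<gamma> a s * path_length \<sigma> a t) ^ n / (fact n)\<^sup>2"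
    by (simp add: power_mult_distrib power2_eq_square)
  finally show ?thesis .
qed

lemma bessel_identity:
  fixes x Lg Ls :: real
  assumes x: "x \<noteq> 0" and Lg: "0 \<le> Lg" and Ls: "0 \<le> Ls"
  shows "(\<Sum>m. \<bar>x\<bar> ^ m * (Lg * Ls) ^ (m + k) / (fact m * fact (m + k)))
       = sqrt Lg ^ k * sqrt Ls ^ k / sqrt \<bar>x\<bar> ^ k * besselI k (2 * sqrt (\<bar>x\<bar> * Lg * Ls))"
proof -
  define r where "r = sqrt (\<bar>x\<bar> * Lg * Ls)"
  define C where "C = Lg * Ls"
  define K where "K = sqrt Lg ^ k * sqrt Ls ^ k / sqrt \<bar>x\<bar> ^ k"
  have r0: "0 \<le> r" unfolding r_def using Lg Ls by simp
  have C0: "0 \<le> C" using Lg Ls by (simp add: C_def)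
  have r2: "r ^ 2 = \<bar>x\<bar> * C" unfolding r_def C_def using Lg Ls by (simp add: mult.assoc)
  have rk: "r ^ k = sqrt \<bar>x\<bar> ^ k * (sqrt Lg ^ k * sqrt Ls ^ k)"
    by (simp add: r_def real_sqrt_mult power_mult_distrib)
  have xk: "sqrt \<bar>x\<bar> ^ k \<noteq> 0" using x by simp
  have e1: "sqrt Lg ^ k * sqrt Lg ^ k = Lg ^ k" using Lg by (simp add: power_mult_distrib[symmetric])
  have e2: "sqrt Ls ^ k * sqrt Ls ^ k = Ls ^ k" using Ls by (simp add: power_mult_distrib[symmetric])
  have "sqrt Lg ^ k * sqrt Ls ^ k * (sqrt Lg ^ k * sqrt Ls ^ k) = (sqrt Lg ^ k * sqrt Lg ^ k) * (sqrt Ls ^ k * sqrt Ls ^ k)"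
    by (simp add: mult_ac)
  also have "\<dots> = C ^ k" unfolding e1 e2 C_def by (simp add: power_mult_distrib)
  finally have Kr: "K * r ^ k = C ^ k" unfolding K_def rk using xk by (simp add: field_simps)
  define b where "b m = (2 * r / 2) ^ (2 * m + k) / (fact m * fact (m + k))" for m
  have bI: "besselI k (2 * r) = suminf b" unfolding besselI_def b_def ..
  have b_eq: "b m = \<bar>r\<bar> ^ m * r ^ (m + k) / (fact m * fact (m + k))" for m
  proof -
    have e: "2 * m + k = m + (m + k)" "2 * r / 2 = r" by simp_all
    have "(2 * r / 2) ^ (2 * m + k) = r ^ m * r ^ (m + k)" unfolding e by (simp only: power_add)
    then show ?thesis unfolding b_def using r0 by simp
  qed
  have sb: "summable b" unfolding b_eq[abs_def] by (rule g_summable[OF r0])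
  have Kb: "K * b m = \<bar>x\<bar> ^ m * C ^ (m + k) / (fact m * fact (m + k))" for m
  proof -
    have "b m = (r ^ 2) ^ m * r ^ k / (fact m * fact (m + k))"
    proof -
      have e: "2 * r / 2 = r" by simp
      have "r ^ (2 * m + k) = (r ^ 2) ^ m * r ^ k" by (simp only: power_add power_mult)
      then show ?thesis unfolding b_def e by simp
    qed
    then have "K * b m = (r ^ 2) ^ m * (K * r ^ k) / (fact m * fact (m + k))" by (simp add: field_simps)
    also have "\<dots> = (\<bar>x\<bar> * C) ^ m * C ^ k / (fact m * fact (m + k))" unfolding Kr r2 ..
    also have "\<dots> = \<bar>x\<bar> ^ m * C ^ (m + k) / (fact m * fact (m + k))"
      by (simp add: power_add power_mult_distrib mult_ac)
    finally show ?thesis .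
  qed
  have "(\<Sum>m. \<bar>x\<bar> ^ m * C ^ (m + k) / (fact m * fact (m + k))) = (\<Sum>m. K * b m)"
    unfolding Kb ..
  also have "\<dots> = K * suminf b" by (rule suminf_mult[OF sb])
  finally show ?thesis unfolding K_def C_def bI[symmetric] r_def .
qed

theorem mainTheorem15:
  fixes \<gamma> \<sigma> :: "real \<Rightarrow> 'a::euclidean_space"
    and a b s t :: real
    and f :: "real \<Rightarrow> real"
  assumes "a \<le> b"
    and "continuous_on {a..b} \<gamma>" and "continuous_on {a..b} \<sigma>"
    and "has_bounded_variation_on \<gamma> a b" and "has_bounded_variation_on \<sigma> a b"
    and "s \<in> {a..b}" and "t \<in> {a..b}"
    and f_def: "f = (\<lambda>x. \<Sum>k. x ^ k * sig_inner \<gamma> \<sigma> a s t k)"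
  shows "(\<forall>k x. (deriv ^^ k) f differentiable (at x))
       \<and> (\<forall>k x. (deriv ^^ k) f x =
              (\<Sum>l. x ^ l * (fact (l + k) / fact l) * sig_inner \<gamma> \<sigma> a s t (l + k)))
       \<and> (\<forall>k x. x \<noteq> 0 \<longrightarrow>
              \<bar>(deriv ^^ k) f x\<bar> \<le>
                sqrt (path_length \<gamma> a s) ^ k * sqrt (path_length \<sigma> a t) ^ k / sqrt \<bar>x\<bar> ^ k
                * besselI k (2 * sqrt (\<bar>x\<bar> * path_length \<gamma> a s * path_length \<sigma> a t)))"
proof -
  define c where "c = sig_inner \<gamma> \<sigma> a s t"
  define Lg where "Lg = path_length \<gamma> a s"
  define Ls where "Ls = path_length \<sigma> a t"
  define C where "C = Lg * Ls"
  have Lg0: "0 \<le> Lg" unfolding Lg_def using V_nonneg[OF assms(4)] assms(6) by auto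
  have Ls0: "0 \<le> Ls" unfolding Ls_def using V_nonneg[OF assms(5)] assms(7) by auto
  have C0: "0 \<le> C" using Lg0 Ls0 by (simp add: C_def)
  have cb: "\<bar>c n\<bar> \<le> C ^ n / (fact n)\<^sup>2" for n
    unfolding c_def C_def Lg_def Ls_def by (rule coeff_bound[OF assms(1-7)])
  have f': "f = (\<lambda>x. \<Sum>n. x ^ n * c n)" unfolding f_def c_def ..
  note E = series_facts(1)[OF cb C0 f']
  note D = series_facts(2)[OF cb C0 f']
  have P1: "\<forall>k x. (deriv ^^ k) f differentiable (at x)"
  proof (intro allI)
    fix k x
    show "(deriv ^^ k) f differentiable (at x)"
      using D[of k x] unfolding has_field_derivative_def differentiable_def by blast
  qed
  have T: "(\<lambda>n. (diffs ^^ k) c n * x ^ n) = (\<lambda>l. x ^ l * (fact (l + k) / fact l) * c (l + k))" for k x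
    by (rule ext) (simp add: diffs_pow)
  have P2: "(deriv ^^ k) f x = (\<Sum>l. x ^ l * (fact (l + k) / fact l) * c (l + k))" for k x
    unfolding E T ..
  have P3: "\<bar>(deriv ^^ k) f x\<bar> \<le> sqrt Lg ^ k * sqrt Ls ^ k / sqrt \<bar>x\<bar> ^ k
                * besselI k (2 * sqrt (\<bar>x\<bar> * Lg * Ls))" if x: "x \<noteq> 0" for k x
  proof -
    let ?T = "\<lambda>l. x ^ l * (fact (l + k) / fact l) * c (l + k)"
    let ?G = "\<lambda>l. \<bar>x\<bar> ^ l * C ^ (l + k) / (fact l * fact (l + k))"
    have TG: "\<bar>?T l\<bar> \<le> ?G l" for l
      using term_bound[OF cb, of l k x] by (simp add: mult_ac)
    have sG: "summable ?G" by (rule g_summable[OF C0])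
    have sT: "summable (\<lambda>l. \<bar>?T l\<bar>)"
      by (rule summable_comparison_test[OF _ sG]) (use TG in auto)
    have "\<bar>(deriv ^^ k) f x\<bar> = \<bar>suminf ?T\<bar>" unfolding P2 ..
    also have "\<dots> \<le> (\<Sum>l. \<bar>?T l\<bar>)" by (rule summable_rabs[OF sT])
    also have "\<dots> \<le> suminf ?G" by (rule suminf_le[OF TG sT sG])
    also have "\<dots> = sqrt Lg ^ k * sqrt Ls ^ k / sqrt \<bar>x\<bar> ^ k * besselI k (2 * sqrt (\<bar>x\<bar> * Lg * Ls))"
      unfolding C_def by (rule bessel_identity[OF x Lg0 Ls0])
    finally show ?thesis .
  qed
  show ?thesis using P1 P2 P3 unfolding c_def Lg_def Ls_def by blast
qed

end
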